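(* Let $k\ge2$, $\varepsilon>0$, and let $r$ be a multiple of $k$ with $r\ge 6/\varepsilon$. Let $R$ be a graph on $[r]$ with $\delta(R)\ge(1-\frac1k+\varepsilon)r$, and let $Q$ be a $K_k$-factor of $R$ consisting of the vertex-disjoint cliques $Q^1,\dots,Q^{r/k}$. Let $D$ be the directed graph on $[r]$ with arc set $\{\overrightarrow{ij}: i\ne j\in[r],\ N_Q(j)\subseteq N_R(i)\}$. Then there exist at least two indices $s\in[r/k]$ such that for every $j\in V(Q^s)$ and every $i\in[r]\setminus\{j\}$ there is a directed path from $i$ to $j$ in $D$.
   Context: $N_Q(j)$ denotes the neighbourhood of $j$ in $Q$ (the other $k-1$ vertices of the clique of $Q$ containing $j$), and $N_R(i)$ the neighbourhood of $i$ in $R$. A $K_k$-factor of $R$ is a spanning subgraph consisting of vertex-disjoint copies of $K_k$. *)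

theory Defs
  imports Main Complex_Main
begin

definition simple_graph_on :: "nat \<Rightarrow> (nat \<Rightarrow> nat \<Rightarrow> bool) \<Rightarrow> bool" where
  "simple_graph_on r E \<longleftrightarrow>
     (\<forall>u v. E u v \<longrightarrow> u \<in> {1..r} \<and> v \<in> {1..r}) \<and>
     (\<forall>u v. E u v \<longrightarrow> E v u) \<and> (\<forall>u. \<not> E u u)"

definition nbhd :: "(nat \<Rightarrow> nat \<Rightarrow> bool) \<Rightarrow> nat \<Rightarrow> nat set" where
  "nbhd E i = {u. E i u}"

definition min_degree_ge :: "nat \<Rightarrow> (nat \<Rightarrow> nat \<Rightarrow> bool) \<Rightarrow> real \<Rightarrow> bool" where
  "min_degree_ge r E d \<longleftrightarrow> (\<forall>v \<in> {1..r}. real (card (nbhd E v)) \<ge> d)"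

definition Kk_factor :: "nat \<Rightarrow> nat \<Rightarrow> (nat \<Rightarrow> nat \<Rightarrow> bool) \<Rightarrow> (nat \<Rightarrow> nat set) \<Rightarrow> bool" where
  "Kk_factor r k E Q \<longleftrightarrow>
     (\<forall>s \<in> {1..r div k}. Q s \<subseteq> {1..r} \<and> card (Q s) = k \<and>
        (\<forall>u \<in> Q s. \<forall>v \<in> Q s. u \<noteq> v \<longrightarrow> E u v)) \<and>
     (\<forall>s \<in> {1..r div k}. \<forall>t \<in> {1..r div k}. s \<noteq> t \<longrightarrow> Q s \<inter> Q t = {}) \<and>
     (\<Union>s \<in> {1..r div k}. Q s) = {1..r}"

definition nbhdQ :: "nat \<Rightarrow> nat \<Rightarrow> (nat \<Rightarrow> nat set) \<Rightarrow> nat \<Rightarrow> nat set" where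
  "nbhdQ r k Q j = (\<Union>s \<in> {s \<in> {1..r div k}. j \<in> Q s}. Q s - {j})"

definition arcsD :: "nat \<Rightarrow> nat \<Rightarrow> (nat \<Rightarrow> nat \<Rightarrow> bool) \<Rightarrow> (nat \<Rightarrow> nat set) \<Rightarrow> (nat \<times> nat) set" where
  "arcsD r k E Q = {(i, j). i \<in> {1..r} \<and> j \<in> {1..r} \<and> i \<noteq> j \<and> nbhdQ r k Q j \<subseteq> nbhd E i}"

end

theory Submission
  imports Defs
begin

lemma Q_fin:
  assumes F: "Kk_factor r k R Q" and t: "t \<in> {1..r div k}"
  shows "finite (Q t)" "card (Q t) = k" "Q t \<subseteq> {1..r}"
proof -
  have "\<forall>s \<in> {1..r div k}. Q s \<subseteq> {1..r} \<and> card (Q s) = k"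
    using F unfolding Kk_factor_def by blast
  then show "Q t \<subseteq> {1..r}" "card (Q t) = k" using t by blast+
  then show "finite (Q t)" using finite_subset by blast
qed

lemma out_arc:
  assumes F: "Kk_factor r k R Q"
  and t: "t \<in> {1..r div k}" and j: "j \<in> Q t" and i: "i \<in> {1..r}" and ij: "i \<noteq> j"
  and sub: "Q t - {j} \<subseteq> nbhd R i"
  shows "(i,j) \<in> arcsD r k R Q"
proof -
  have jr: "j \<in> {1..r}" using F t j unfolding Kk_factor_def by blast
  have "nbhdQ r k Q j \<subseteq> Q t - {j}"
  proof
    fix u assume "u \<in> nbhdQ r k Q j"
    then obtain s where s: "s \<in> {1..r div k}" "j \<in> Q s" "u \<in> Q s - {j}"
      unfolding nbhdQ_def by blast
    have "s = t" using F s t j unfolding Kk_factor_def by blast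
    then show "u \<in> Q t - {j}" using s by simp
  qed
  then show ?thesis using sub i jr ij unfolding arcsD_def by auto
qed

lemma deg_sum:
  assumes F: "Kk_factor r k R Q" and G: "simple_graph_on r R"
  shows "card (nbhd R i) = (\<Sum>t\<in>{1..r div k}. card (nbhd R i \<inter> Q t))"
proof -
  have U: "(\<Union>s \<in> {1..r div k}. Q s) = {1..r}" using F unfolding Kk_factor_def by blast
  have D: "\<forall>s \<in> {1..r div k}. \<forall>t \<in> {1..r div k}. s \<noteq> t \<longrightarrow> Q s \<inter> Q t = {}"
    using F unfolding Kk_factor_def by blast
  have sub: "nbhd R i \<subseteq> {1..r}" using G unfolding simple_graph_on_def nbhd_def by auto
  have "nbhd R i = nbhd R i \<inter> (\<Union>s \<in> {1..r div k}. Q s)" using sub U by (simp add: Int_absorb2)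
  also have "\<dots> = (\<Union>t\<in>{1..r div k}. nbhd R i \<inter> Q t)" by (rule Int_UN_distrib)
  finally have "nbhd R i = (\<Union>t\<in>{1..r div k}. nbhd R i \<inter> Q t)" .
  moreover have "card (\<Union>t\<in>{1..r div k}. nbhd R i \<inter> Q t) = (\<Sum>t\<in>{1..r div k}. card (nbhd R i \<inter> Q t))"
  proof (rule card_UN_disjoint)
    show "finite {1..r div k}" by simp
    show "\<forall>t\<in>{1..r div k}. finite (nbhd R i \<inter> Q t)" using Q_fin(1)[OF F] by blast
    show "\<forall>s\<in>{1..r div k}. \<forall>t\<in>{1..r div k}. s \<noteq> t \<longrightarrow> (nbhd R i \<inter> Q s) \<inter> (nbhd R i \<inter> Q t) = {}"
      using D by blast
  qed
  ultimately show ?thesis by simp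
qed

lemma f_le:
  assumes F: "Kk_factor r k R Q" and t: "t \<in> {1..r div k}"
  shows "card (nbhd R i \<inter> Q t) \<le> k"
  using card_mono[OF Q_fin(1)[OF F t] Int_lower2[of "nbhd R i" "Q t"]] Q_fin(2)[OF F t] by simp

lemma f_lt:
  assumes F: "Kk_factor r k R Q" and t: "t \<in> {1..r div k}" and ns: "\<not> Q t \<subseteq> nbhd R i"
  shows "card (nbhd R i \<inter> Q t) \<le> k - 1"
proof -
  have "nbhd R i \<inter> Q t \<subset> Q t" using ns by auto
  then have "card (nbhd R i \<inter> Q t) < card (Q t)" using psubset_card_mono Q_fin(1)[OF F t] by blast
  then show ?thesis using Q_fin(2)[OF F t] by simp
qed

lemma self_notin: "simple_graph_on r R \<Longrightarrow> x \<notin> nbhd R x"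
  unfolding simple_graph_on_def nbhd_def by auto

lemma dom2:
  assumes F: "Kk_factor r k R Q" and G: "simple_graph_on r R"
    and deg: "card (nbhd R i) \<ge> (k-1)*(r div k) + 6"
  shows "card {t\<in>{1..r div k}. Q t \<subseteq> nbhd R i} \<ge> 2"
proof (rule ccontr)
  define D where "D = {t\<in>{1..r div k}. Q t \<subseteq> nbhd R i}"
  assume "\<not> card {t\<in>{1..r div k}. Q t \<subseteq> nbhd R i} \<ge> 2"
  then have cD: "card D \<le> 1" unfolding D_def by simp
  have "\<forall>t\<in>{1..r div k}. card (nbhd R i \<inter> Q t) \<le> (k-1) + (if t \<in> D then 1 else 0)"
  proof
    fix t assume t: "t \<in> {1..r div k}"
    show "card (nbhd R i \<inter> Q t) \<le> (k-1) + (if t \<in> D then 1 else 0)"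
      using f_le[OF F t, of i] f_lt[OF F t, of i] t unfolding D_def by auto
  qed
  then have "(\<Sum>t\<in>{1..r div k}. card (nbhd R i \<inter> Q t)) \<le> (\<Sum>t\<in>{1..r div k}. (k-1) + (if t \<in> D then 1 else 0))"
    by (intro sum_mono) blast
  also have "\<dots> = (r div k) * (k-1) + card D"
  proof -
    have Dsub: "D \<subseteq> {1..r div k}" unfolding D_def by auto
    show ?thesis unfolding sum.distrib using Dsub by (simp add: sum.If_cases) (metis Dsub Int_absorb1 One_nat_def)
  qed
  finally show False using deg deg_sum[OF F G, of i] cD by (simp add: mult.commute)
qed

lemma one_clique:
  assumes F: "Kk_factor r k R Q"
  shows "card {t\<in>{1..r div k}. x \<in> Q t} \<le> 1"
proof -
  have fin: "finite {t\<in>{1..r div k}. x \<in> Q t}" by simp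
  moreover have all: "\<forall>a\<in>{t\<in>{1..r div k}. x \<in> Q t}. \<forall>b\<in>{t\<in>{1..r div k}. x \<in> Q t}. a = b"
    using F unfolding Kk_factor_def by blast
  ultimately show ?thesis using card_le_Suc0_iff_eq[OF fin] by (simp only: One_nat_def)
qed

lemma common_aux:
  assumes F: "Kk_factor r k R Q" and k: "k \<ge> 2"
    and t: "t \<in> {1..r div k}" and x: "x \<in> {1..r}" and y: "y \<in> {1..r}"
    and xt: "x \<notin> Q t" and yt: "y \<notin> Q t"
    and fx: "card (nbhd R x \<inter> Q t) = k" and fy: "card (nbhd R y \<inter> Q t) \<ge> k - 1"
  shows "\<exists>z. (x,z) \<in> arcsD r k R Q \<and> (y,z) \<in> arcsD r k R Q"
proof -
  note fin = Q_fin[OF F t]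
  have "nbhd R x \<inter> Q t = Q t"
    using card_subset_eq[OF fin(1), of "nbhd R x \<inter> Q t"] fx fin(2) by auto
  then have Qx: "Q t \<subseteq> nbhd R x" by auto
  show ?thesis
  proof (cases "Q t \<subseteq> nbhd R y")
    case True
    from fin(2) k have "Q t \<noteq> {}" by auto
    then obtain z where z: "z \<in> Q t" by auto
    show ?thesis
      using out_arc[OF F t z x] out_arc[OF F t z y] z xt yt Qx True by blast
  next
    case False
    then obtain j where j: "j \<in> Q t" "j \<notin> nbhd R y" by auto
    have "nbhd R y \<inter> Q t \<subseteq> Q t - {j}" using j by auto
    moreover have "card (Q t - {j}) = k - 1" using fin j by simp
    moreover have "card (nbhd R y \<inter> Q t) \<le> card (Q t - {j})"
      using card_mono[OF _ calculation(1)] fin(1) by simp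
    ultimately have "nbhd R y \<inter> Q t = Q t - {j}"
      using card_subset_eq[of "Q t - {j}" "nbhd R y \<inter> Q t"] fin(1) fy by simp
    then have "Q t - {j} \<subseteq> nbhd R y" by auto
    then show ?thesis
      using out_arc[OF F t j(1) x] out_arc[OF F t j(1) y] j xt yt Qx by blast
  qed
qed

lemma common:
  assumes F: "Kk_factor r k R Q" and G: "simple_graph_on r R" and k: "k \<ge> 2"
    and x: "x \<in> {1..r}" and y: "y \<in> {1..r}"
    and degx: "card (nbhd R x) \<ge> (k-1)*(r div k) + 6"
    and degy: "card (nbhd R y) \<ge> (k-1)*(r div k) + 6"
  shows "\<exists>z. (x,z) \<in> arcsD r k R Q \<and> (y,z) \<in> arcsD r k R Q"
proof (rule ccontr)
  assume nc: "\<not> ?thesis"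
  let ?fx = "\<lambda>t. card (nbhd R x \<inter> Q t)"
  let ?fy = "\<lambda>t. card (nbhd R y \<inter> Q t)"
  have per: "\<forall>t\<in>{1..r div k}. ?fx t + ?fy t \<le> (2*k-2) + ((if x \<in> Q t then 1 else 0) + (if y \<in> Q t then 1 else 0))"
  proof
    fix t assume t: "t \<in> {1..r div k}"
    have a: "?fx t \<le> k" "?fy t \<le> k" using f_le[OF F t] by auto
    have b: "x \<in> Q t \<Longrightarrow> ?fx t \<le> k - 1" using f_lt[OF F t] self_notin[OF G, of x] by blast
    have c: "y \<in> Q t \<Longrightarrow> ?fy t \<le> k - 1" using f_lt[OF F t] self_notin[OF G, of y] by blast
    show "?fx t + ?fy t \<le> (2*k-2) + ((if x \<in> Q t then 1 else 0) + (if y \<in> Q t then 1 else 0))"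
    proof (cases "x \<in> Q t \<or> y \<in> Q t")
      case True
      then show ?thesis using a b c k by auto
    next
      case False
      have "\<not> (?fx t = k \<and> ?fy t \<ge> k - 1)"
        using common_aux[OF F k t x y] False nc by blast
      moreover have "\<not> (?fy t = k \<and> ?fx t \<ge> k - 1)"
        using common_aux[OF F k t y x] False nc by blast
      ultimately show ?thesis using a k False by auto
    qed
  qed
  then have "(\<Sum>t\<in>{1..r div k}. ?fx t + ?fy t) \<le> (\<Sum>t\<in>{1..r div k}. (2*k-2) + ((if x \<in> Q t then 1 else 0) + (if y \<in> Q t then 1 else 0)))"
    by (intro sum_mono) blast
  also have "\<dots> = (r div k)*(2*k-2) + (card {t\<in>{1..r div k}. x \<in> Q t} + card {t\<in>{1..r div k}. y \<in> Q t})"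
    unfolding sum.distrib by (simp add: sum.If_cases Int_def)
  also have "\<dots> \<le> (r div k)*(2*k-2) + 2"
    using one_clique[OF F, of x] one_clique[OF F, of y] by simp
  finally have "(\<Sum>t\<in>{1..r div k}. ?fx t) + (\<Sum>t\<in>{1..r div k}. ?fy t) \<le> (r div k)*(2*k-2) + 2"
    by (simp add: sum.distrib)
  moreover have "(r div k)*(2*k-2) = 2*((k-1)*(r div k))" by (simp add: algebra_simps)
  ultimately show False using degx degy deg_sum[OF F G, of x] deg_sum[OF F G, of y] by linarith
qed

theorem claim5p2:
  fixes k r :: nat and \<epsilon> :: real and R :: "nat \<Rightarrow> nat \<Rightarrow> bool" and Q :: "nat \<Rightarrow> nat set"
  assumes "k \<ge> 2" and "\<epsilon> > 0" and "k dvd r" and "real r \<ge> 6 / \<epsilon>"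
    and "simple_graph_on r R"
    and "min_degree_ge r R ((1 - 1 / real k + \<epsilon>) * real r)"
    and "Kk_factor r k R Q"
  shows "card {s \<in> {1..r div k}. \<forall>j \<in> Q s. \<forall>i \<in> {1..r} - {j}.
                (i, j) \<in> (arcsD r k R Q)\<^sup>+} \<ge> 2"
proof -
  note k = assms(1) and G = assms(5) and F = assms(7)
  define m where "m = r div k"
  define A where "A = arcsD r k R Q"
  have r: "r = k * m" using assms(3) unfolding m_def by simp
  have er: "\<epsilon> * real r \<ge> 6"
    using assms(2,4) by (simp add: divide_le_eq mult.commute)
  have rpos: "r \<ge> 1"
  proof -
    have "6 / \<epsilon> > 0" using assms(2) by simp
    then show ?thesis using assms(4) by linarith
  qed
  have deg: "card (nbhd R i) \<ge> (k-1)*m + 6" if i: "i \<in> {1..r}" for i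
  proof -
    have "real (card (nbhd R i)) \<ge> (1 - 1 / real k + \<epsilon>) * real r"
      using assms(6) i unfolding min_degree_ge_def by blast
    moreover have "(1 - 1 / real k + \<epsilon>) * real r = real (k-1) * real m + \<epsilon> * real r"
      using k by (simp add: r of_nat_diff field_simps)
    ultimately have "real (card (nbhd R i)) \<ge> real ((k-1)*m) + 6" using er by simp
    then show ?thesis by linarith
  qed
  have Asub: "A \<subseteq> {1..r} \<times> {1..r}" unfolding A_def arcsD_def by auto
  define reach where "reach x = {z. (x,z) \<in> A\<^sup>+}" for x
  have reach_sub: "reach x \<subseteq> {1..r}" for x
  proof
    fix z assume "z \<in> reach x"
    then have "(x,z) \<in> A\<^sup>+" unfolding reach_def by simp
    then show "z \<in> {1..r}" using Asub by (induct rule: trancl_induct) auto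
  qed
  have reach_fin: "finite (reach x)" for x using reach_sub finite_subset by blast
  have arc_reach: "(x,z) \<in> A \<Longrightarrow> z \<in> reach x" for x z unfolding reach_def by auto
  have reach_trans: "y \<in> reach x \<Longrightarrow> reach y \<subseteq> reach x" for x y
    unfolding reach_def by auto
  have meet: "reach x \<inter> reach y \<noteq> {}" if xr: "x \<in> {1..r}" and yr: "y \<in> {1..r}" for x y
  proof -
    have "card (nbhd R x) \<ge> (k-1)*(r div k) + 6" "card (nbhd R y) \<ge> (k-1)*(r div k) + 6"
      using deg xr yr unfolding m_def by auto
    then obtain z where "(x,z) \<in> A" "(y,z) \<in> A"
      using common[OF F G k xr yr] unfolding A_def by blast
    then have "z \<in> reach x" "z \<in> reach y" using arc_reach by auto
    then show ?thesis by blast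
  qed
  obtain x0 where x0: "x0 \<in> {1..r}" and x0min: "\<forall>y. y \<in> {1..r} \<longrightarrow> card (reach x0) \<le> card (reach y)"
    using ex_has_least_nat[of "\<lambda>x. x \<in> {1..r}" 1 "\<lambda>x. card (reach x)"] rpos by auto
  define C where "C = reach x0"
  have Cstrong: "C \<subseteq> reach y" if y: "y \<in> C" for y
  proof -
    have "reach y \<subseteq> C" using reach_trans y unfolding C_def by blast
    moreover have "y \<in> {1..r}" using y reach_sub unfolding C_def by blast
    then have "card C \<le> card (reach y)" using x0min unfolding C_def by blast
    moreover have "card (reach y) \<le> card C" using calculation(1) card_mono[OF reach_fin] unfolding C_def by blast
    ultimately have "reach y = C" using card_subset_eq[OF reach_fin[of x0]] unfolding C_def by simp
    then show ?thesis by simp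
  qed
  have allreach: "(z,c) \<in> A\<^sup>+" if z: "z \<in> {1..r}" and c: "c \<in> C" for z c
  proof -
    obtain w where w: "w \<in> reach z" "w \<in> C" using meet[OF z x0] unfolding C_def by blast
    have "c \<in> reach w" using Cstrong[OF w(2)] c by blast
    then show ?thesis using w(1) unfolding reach_def by auto
  qed
  have "C \<noteq> {}" using meet[OF x0 x0] unfolding C_def by blast
  then obtain c0 where c0: "c0 \<in> C" by auto
  have c0r: "c0 \<in> {1..r}" using c0 reach_sub unfolding C_def by blast
  have "{t\<in>{1..r div k}. Q t \<subseteq> nbhd R c0} \<subseteq> {s \<in> {1..r div k}. \<forall>j \<in> Q s. \<forall>i \<in> {1..r} - {j}.
                (i, j) \<in> (arcsD r k R Q)\<^sup>+}"
  proof (intro subsetI CollectI conjI ballI)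
    fix t assume t: "t \<in> {t\<in>{1..r div k}. Q t \<subseteq> nbhd R c0}"
    then show "t \<in> {1..r div k}" by simp
    fix j i assume j: "j \<in> Q t" and i: "i \<in> {1..r} - {j}"
    have "c0 \<noteq> j" using t j self_notin[OF G, of c0] by auto
    then have "(c0, j) \<in> A" using out_arc[OF F _ j c0r] t unfolding A_def by blast
    then have "j \<in> C" using reach_trans[of c0 x0] c0 arc_reach unfolding C_def by blast
    then show "(i, j) \<in> (arcsD r k R Q)\<^sup>+" using allreach i unfolding A_def by blast
  qed
  moreover have "card {t\<in>{1..r div k}. Q t \<subseteq> nbhd R c0} \<ge> 2"
    using dom2[OF F G] deg[OF c0r] unfolding m_def by blast
  moreover have "finite {s \<in> {1..r div k}. \<forall>j \<in> Q s. \<forall>i \<in> {1..r} - {j}.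
                (i, j) \<in> (arcsD r k R Q)\<^sup>+}" by simp
  ultimately show ?thesis
    using card_mono[of "{s \<in> {1..r div k}. \<forall>j \<in> Q s. \<forall>i \<in> {1..r} - {j}.
                (i, j) \<in> (arcsD r k R Q)\<^sup>+}" "{t\<in>{1..r div k}. Q t \<subseteq> nbhd R c0}"] by linarith
qed

end
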